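(* Assume $0<|\mathscr{C}|\leq\tfrac12$. Then for $z\in\mathbb{U}$ (except at points where $d_{-1}(z)$ or $d_1(z)$ vanishes) the characteristic equation $d_{-1}(z)\kappa^{-1}+d_0(z)+d_1(z)\kappa=0$ of the fourth-order D1Q3 scheme has two roots, one stable root $\kappa_s(z)\in\mathbb{D}$ and one unstable root $\kappa_u(z)\in\mathbb{U}$. They extend to $z\in\mathbb{S}$ (extensions still denoted $\kappa_s,\kappa_u$), and $$\kappa_s(1)=\begin{cases}-1,&\mathscr{C}<0,\\1,&\mathscr{C}>0,\end{cases}\qquad \kappa_u(1)=\begin{cases}1,&\mathscr{C}<0,\\-1,&\mathscr{C}>0,\end{cases}\qquad \kappa_s(-1)=\kappa_u(-1)=1.$$
   Context: $\mathbb{D}=\{|z|<1\}$, $\mathbb{S}=\{|z|=1\}$, $\mathbb{U}=\{|z|>1\}$. Fourth-order D1Q3 scheme: $q=3$, velocities $c_1=0$, $c_2=1$, $c_3=-1$, $M=\begin{pmatrix}1&1&1\\0&1&-1\\0&1&1\end{pmatrix}$, equilibrium $\epsilon=(1,\mathscr{C},\tfrac13(1+2\mathscr{C}^2))$, $s_2=s_3=2$, $K:=I_3+\mathrm{diag}(s_1,2,2)(\epsilon e_1^{\mathsf T}-I_3)$ ($s_1$ arbitrary), $\hat E(\kappa):=M\mathrm{diag}(1,\kappa^{-1},\kappa)M^{-1}K$. Characteristic equation: $\det(zI_3-\hat E(\kappa))=d_{-1}(z)\kappa^{-1}+d_0(z)+d_1(z)\kappa$, where explicitly $d_{-1}(z)=-\tfrac13(2\mathscr{C}^2+3\mathscr{C}-2)z^2+\tfrac13(2\mathscr{C}^2-3\mathscr{C}-2)z$,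 $d_0(z)=z^3+\tfrac13(4\mathscr{C}^2-1)z^2-\tfrac13(4\mathscr{C}^2-1)z-1$, $d_1(z)=-\tfrac13(2\mathscr{C}^2-3\mathscr{C}-2)z^2+\tfrac13(2\mathscr{C}^2+3\mathscr{C}-2)z$. *)

theory Defs
  imports "HOL-Analysis.Analysis"
begin

text \<open>Coefficients of the characteristic equation
  det(z I - E(kappa)) = d_m1 z / kappa + d_0 z + d_1 z * kappa
  of the fourth-order D1Q3 scheme, with Courant number C (real).\<close>

definition d_m1 :: "real \<Rightarrow> complex \<Rightarrow> complex" where
  "d_m1 C z = - (of_real ((2*C^2 + 3*C - 2)/3)) * z^2 + of_real ((2*C^2 - 3*C - 2)/3) * z"

definition d_0 :: "real \<Rightarrow> complex \<Rightarrow> complex" where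
  "d_0 C z = z^3 + of_real ((4*C^2 - 1)/3) * z^2 - of_real ((4*C^2 - 1)/3) * z - 1"

definition d_1 :: "real \<Rightarrow> complex \<Rightarrow> complex" where
  "d_1 C z = - (of_real ((2*C^2 - 3*C - 2)/3)) * z^2 + of_real ((2*C^2 + 3*C - 2)/3) * z"

definition char_root :: "real \<Rightarrow> complex \<Rightarrow> complex \<Rightarrow> bool" where
  "char_root C z \<kappa> \<longleftrightarrow> \<kappa> \<noteq> 0 \<and> d_m1 C z * inverse \<kappa> + d_0 C z + d_1 C z * \<kappa> = 0"

end

theory Submission
  imports Defs
begin


definition sg :: "real \<Rightarrow> real" where "sg C = 4*(1-C^2)/3"
definition t1 :: "real \<Rightarrow> real" where "t1 C = sg C + sqrt (sg C ^2 - sg C)"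
definition t2 :: "real \<Rightarrow> real" where "t2 C = sg C - sqrt (sg C ^2 - sg C)"
definition uu :: "real \<Rightarrow> complex" where "uu t = Complex (t/2) (sqrt (1 - t^2/4))"
definition FF :: "real \<Rightarrow> complex \<Rightarrow> complex" where
  "FF t z = csqrt (1 - uu t / z) * csqrt (1 - cnj (uu t) / z)"
definition GG :: "real \<Rightarrow> complex \<Rightarrow> complex" where
  "GG C z = z^3 * (1 + 1/z) * FF (t1 C) z * FF (t2 C) z"

lemma sg_bounds: assumes "0 < \<bar>C\<bar>" "\<bar>C\<bar> \<le> 1/2" shows "1 \<le> sg C" "sg C < 4/3"
proof -
  have "C^2 \<le> (1/2)^2" using abs_le_square_iff[of C "1/2"] assms by simp
  moreover have "0 < C^2" using assms by simp
  ultimately show "1 \<le> sg C" "sg C < 4/3" by (auto simp: sg_def power_divide)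
qed

lemma t_bounds: assumes "0 < \<bar>C\<bar>" "\<bar>C\<bar> \<le> 1/2"
  shows "0 \<le> t2 C" "t2 C \<le> t1 C" "t1 C < 2"
proof -
  note b = sg_bounds[OF assms]
  have nn: "0 \<le> sg C ^2 - sg C" using b by (simp add: power2_eq_square)
  have "sqrt (sg C ^2 - sg C) \<le> sqrt (sg C ^2)" using b by (intro real_sqrt_le_mono) linarith
  then have "sqrt (sg C ^2 - sg C) \<le> sg C" using b by simp
  then show "0 \<le> t2 C" unfolding t2_def by linarith
  show "t2 C \<le> t1 C" using nn by (simp add: t1_def t2_def)
  have "sg C ^2 - sg C < (2 - sg C)^2" using b by (simp add: power2_eq_square algebra_simps)
  then have "sqrt (sg C ^2 - sg C) < sqrt ((2 - sg C)^2)" by (intro real_sqrt_less_mono)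
  then show "t1 C < 2" using b by (simp add: t1_def)
qed

lemma t_sum_prod: assumes "0 < \<bar>C\<bar>" "\<bar>C\<bar> \<le> 1/2"
  shows "t1 C + t2 C = 2 * sg C" "t1 C * t2 C = sg C"
proof -
  note b = sg_bounds[OF assms]
  have nn: "0 \<le> sg C ^2 - sg C" using b by (simp add: power2_eq_square)
  show "t1 C + t2 C = 2 * sg C" by (simp add: t1_def t2_def)
  have "t1 C * t2 C = sg C ^2 - (sqrt (sg C ^2 - sg C))^2" by (simp add: t1_def t2_def algebra_simps power2_eq_square)
  then show "t1 C * t2 C = sg C" using nn by simp
qed

lemma uu_props: assumes "\<bar>t\<bar> \<le> 2"
  shows "cmod (uu t) = 1" "uu t + cnj (uu t) = of_real t" "uu t * cnj (uu t) = 1"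
proof -
  have "t^2 \<le> 2^2" using abs_le_square_iff[of t 2] assms by simp
  then have nn: "0 \<le> 1 - t^2/4" by simp
  have s: "(sqrt (1 - t^2/4))^2 = 1 - t^2/4" using nn by simp
  show "uu t + cnj (uu t) = of_real t" by (simp add: uu_def complex_eq_iff)
  have "cmod (uu t) = sqrt ((t/2)^2 + (sqrt (1 - t^2/4))^2)" by (simp add: uu_def cmod_def)
  also have "\<dots> = 1" unfolding s by (simp add: power_divide)
  finally show "cmod (uu t) = 1" .
  then show "uu t * cnj (uu t) = 1" using complex_norm_square[of "uu t"] by simp
qed

lemma FF_sq: assumes "z \<noteq> 0" "\<bar>t\<bar> \<le> 2"
  shows "(FF t z)^2 * z^2 = z^2 - of_real t * z + 1"
proof -
  have "(FF t z)^2 = (1 - uu t / z) * (1 - cnj (uu t) / z)"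
    by (simp add: FF_def power_mult_distrib)
  then have "(FF t z)^2 * z^2 = (z - uu t) * (z - cnj (uu t))"
    using assms(1) by (simp add: field_simps power2_eq_square)
  also have "\<dots> = z^2 - (uu t + cnj (uu t)) * z + uu t * cnj (uu t)" by (simp add: algebra_simps power2_eq_square)
  finally show ?thesis using uu_props[OF assms(2)] by simp
qed



lemma GG_sq: assumes "0 < \<bar>C\<bar>" "\<bar>C\<bar> \<le> 1/2" "z \<noteq> 0"
  shows "(GG C z)^2 = (d_0 C z)^2 - 4 * d_1 C z * d_m1 C z"
proof -
  have tb: "\<bar>t1 C\<bar> \<le> 2" "\<bar>t2 C\<bar> \<le> 2" using t_bounds[OF assms(1,2)] by auto
  note f1 = FF_sq[OF assms(3) tb(1)] and f2 = FF_sq[OF assms(3) tb(2)]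
  have "(GG C z)^2 = ((FF (t1 C) z)^2 * z^2) * ((FF (t2 C) z)^2 * z^2) * (z * (1 + 1/z))^2"
    by (simp add: GG_def power_mult_distrib algebra_simps power2_eq_square power3_eq_cube)
  also have "\<dots> = (z^2 - of_real (t1 C) * z + 1) * (z^2 - of_real (t2 C) * z + 1) * (z + 1)^2"
  proof -
    have e: "z * (1 + 1/z) = z + 1" using assms(3) by (simp add: field_simps)
    show ?thesis by (simp only: f1 f2 e)
  qed
  also have "\<dots> = (z^4 - of_real (t1 C + t2 C) * z^3 + (2 + of_real (t1 C * t2 C)) * z^2 - of_real (t1 C + t2 C) * z + 1) * (z + 1)^2"
    by (simp add: algebra_simps power2_eq_square power3_eq_cube power4_eq_xxxx)
  also have "\<dots> = (z^4 - of_real (2 * sg C) * z^3 + (2 + of_real (sg C)) * z^2 - of_real (2 * sg C) * z + 1) * (z + 1)^2"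
    using t_sum_prod[OF assms(1,2)] by simp
  also have "\<dots> = (d_0 C z)^2 - 4 * d_1 C z * d_m1 C z"
    by (simp add: d_0_def d_1_def d_m1_def sg_def field_simps power2_eq_square power3_eq_cube power4_eq_xxxx)
  finally show ?thesis .
qed

lemma isCont_csqrt0: "isCont csqrt 0"
proof -
  have "((\<lambda>w. norm (csqrt w)) \<longlongrightarrow> 0) (at 0)"
  proof -
    have "((\<lambda>w::complex. sqrt (norm w)) \<longlongrightarrow> sqrt (norm (0::complex))) (at 0)"
      by (intro tendsto_intros)
    then show ?thesis by simp
  qed
  then have "(csqrt \<longlongrightarrow> 0) (at 0)" by (rule tendsto_norm_zero_cancel)
  then show ?thesis by (simp add: isCont_def)
qed

lemma csqrt_cont: "continuous_on {w. 0 \<le> Re w} csqrt"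
proof (rule continuous_at_imp_continuous_on, safe)
  fix w :: complex assume "0 \<le> Re w"
  show "isCont csqrt w"
  proof (cases "w = 0")
    case True then show ?thesis using isCont_csqrt0 by simp
  next
    case False
    then have "w \<notin> \<real>\<^sub>\<le>\<^sub>0" using \<open>0 \<le> Re w\<close> by (auto simp: complex_nonpos_Reals_iff complex_eq_iff)
    then show ?thesis by (rule continuous_at_csqrt)
  qed
qed

lemma FF_cont: assumes "\<bar>t\<bar> \<le> 2" shows "continuous_on {z. 1 \<le> cmod z} (FF t)"
proof -
  have key: "continuous_on {z. 1 \<le> cmod z} (\<lambda>z. csqrt (1 - a / z))" if "cmod a = 1" for a
  proof (rule continuous_on_compose2[OF csqrt_cont])
    show "continuous_on {z. 1 \<le> cmod z} (\<lambda>z. 1 - a / z)"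
      by (intro continuous_intros) auto
    show "(\<lambda>z. 1 - a / z) ` {z. 1 \<le> cmod z} \<subseteq> {w. 0 \<le> Re w}"
    proof safe
      fix z :: complex assume z: "1 \<le> cmod z"
      have "Re (a / z) \<le> cmod (a / z)" by (rule complex_Re_le_cmod)
      also have "\<dots> \<le> 1" using z that by (simp add: norm_divide divide_le_eq_1)
      finally show "0 \<le> Re (1 - a / z)" by simp
    qed
  qed
  show ?thesis unfolding FF_def
    using uu_props[OF assms] by (intro continuous_intros key) auto
qed

lemma GG_cont: assumes "0 < \<bar>C\<bar>" "\<bar>C\<bar> \<le> 1/2"
  shows "continuous_on {z. 1 \<le> cmod z} (GG C)"
proof -
  have tb: "\<bar>t1 C\<bar> \<le> 2" "\<bar>t2 C\<bar> \<le> 2" using t_bounds[OF assms(1,2)] by auto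
  show ?thesis unfolding GG_def
    by (intro continuous_intros FF_cont tb) auto
qed



lemma Re_cayley_pos: assumes "cmod d = 1" "1 < cmod z"
  shows "0 < Re ((z - d) / (z + d))"
proof -
  have nz: "z + d \<noteq> 0" using assms by (metis add.inverse_unique norm_minus_cancel less_irrefl)
  have num: "Re (z - d) * Re (z + d) + Im (z - d) * Im (z + d) = (cmod z)^2 - (cmod d)^2"
    unfolding cmod_power2 by (simp add: algebra_simps power2_eq_square)
  have "(cmod z)^2 > 1" using assms(2) by (simp add: one_less_power)
  then have "0 < Re (z - d) * Re (z + d) + Im (z - d) * Im (z + d)" using num assms(1) by simp
  moreover have "0 < (Re (z + d))\<^sup>2 + (Im (z + d))\<^sup>2" using nz
    by (simp add: complex_eq_iff sum_power2_gt_zero_iff)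
  ultimately show ?thesis by (simp add: Re_divide)
qed

lemma char_identity: assumes "k \<noteq> 0"
  shows "d_m1 C z * inverse k + d_0 C z + d_1 C z * k =
    of_real ((2-2*C^2)/3) * ((z-1)*(z+inverse k)*(z+k)) +
    of_real ((2*C+1)*(C+1)/6) * ((z - inverse k)*(z+1)*(z+k)) +
    of_real ((2*C-1)*(C-1)/6) * ((z - k)*(z+1)*(z+inverse k))"
  using assms
  by (simp add: d_0_def d_1_def d_m1_def field_simps power2_eq_square power3_eq_cube)

lemma stab: assumes "0 < \<bar>C\<bar>" "\<bar>C\<bar> \<le> 1/2" "1 < cmod z" "cmod k = 1"
  shows "d_m1 C z * inverse k + d_0 C z + d_1 C z * k \<noteq> 0"
proof
  assume eq0: "d_m1 C z * inverse k + d_0 C z + d_1 C z * k = 0"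
  have k0: "k \<noteq> 0" using assms by auto
  have ik: "cmod (inverse k) = 1" using assms(4) by (simp add: norm_inverse)
  have ne: "z + d \<noteq> 0" if "cmod d = 1" for d using assms(3) that
    by (metis add.inverse_unique norm_minus_cancel less_irrefl)
  define p1 where "p1 = (2-2*C^2)/3"
  define p2 where "p2 = (2*C+1)*(C+1)/6"
  define p3 where "p3 = (2*C-1)*(C-1)/6"
  have "C^2 \<le> (1/2)^2" using abs_le_square_iff[of C "1/2"] assms by simp
  then have p1: "0 < p1" by (simp add: p1_def power_divide)
  have "-1/2 \<le> C" "C \<le> 1/2" using assms by auto
  then have p2: "0 \<le> p2" and p3: "0 \<le> p3" unfolding p2_def p3_def
    by (auto intro!: mult_nonneg_nonneg mult_nonpos_nonpos)
  define P where "P = (z+1)*(z+inverse k)*(z+k)"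
  have P0: "P \<noteq> 0" unfolding P_def using ne[of 1] ne[OF ik] ne[OF assms(4)] by simp
  define w where "w = (\<lambda>d. (z - d) / (z + d))"
  have e1: "P * w 1 = (z-1)*(z+inverse k)*(z+k)" unfolding P_def w_def using ne[of 1] by simp
  have e2: "P * w (inverse k) = (z - inverse k)*(z+1)*(z+k)" unfolding P_def w_def using ne[OF ik] by simp
  have e3: "P * w k = (z - k)*(z+1)*(z+inverse k)" unfolding P_def w_def using ne[OF assms(4)] by simp
  have "P * (of_real p1 * w 1 + of_real p2 * w (inverse k) + of_real p3 * w k) =
     of_real p1 * (P * w 1) + of_real p2 * (P * w (inverse k)) + of_real p3 * (P * w k)"
    by (simp add: algebra_simps)
  also have "\<dots> = d_m1 C z * inverse k + d_0 C z + d_1 C z * k"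
    unfolding e1 e2 e3 char_identity[OF k0] p1_def p2_def p3_def by simp
  finally have "P * (of_real p1 * w 1 + of_real p2 * w (inverse k) + of_real p3 * w k) = 0" using eq0 by simp
  then have "0 = of_real p1 * w 1 + of_real p2 * w (inverse k) + of_real p3 * w k" using P0 by simp
  then have "0 = Re (of_real p1 * w 1 + of_real p2 * w (inverse k) + of_real p3 * w k)" by simp
  also have "\<dots> = p1 * Re (w 1) + p2 * Re (w (inverse k)) + p3 * Re (w k)" by simp
  also have "\<dots> > 0"
  proof -
    have "0 < Re (w 1)" "0 < Re (w (inverse k))" "0 < Re (w k)" unfolding w_def
      using Re_cayley_pos[OF _ assms(3)] ik assms(4) by auto
    then show ?thesis using p1 p2 p3 by (simp add: add_pos_nonneg)
  qed
  finally show False by simp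
qed

lemma quad_roots: fixes a b c g :: complex
  assumes "a \<noteq> 0" "c \<noteq> 0" "g^2 = b^2 - 4*a*c"
  shows "{k. k \<noteq> 0 \<and> c * inverse k + b + a * k = 0} = {(-b+g)/(2*a), (-b-g)/(2*a)}"
proof -
  define r1 where "r1 = (-b+g)/(2*a)"
  define r2 where "r2 = (-b-g)/(2*a)"
  have fact: "a * (k - r1) * (k - r2) = a*k^2 + b*k + c" for k
  proof -
    have "a * (k - r1) * (k - r2) = (4*a^2*k^2 + 4*a*b*k + (b^2 - g^2)) / (4*a)"
      unfolding r1_def r2_def using assms(1) by (simp add: field_simps power2_eq_square)
    also have "\<dots> = a*k^2 + b*k + c" using assms(1,3) by (simp add: field_simps power2_eq_square)
    finally show ?thesis .
  qed
  have r12: "r1 \<noteq> 0" "r2 \<noteq> 0"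
    using fact[of 0] assms(1,2) by auto
  have iff: "c * inverse k + b + a * k = 0 \<longleftrightarrow> a*k^2 + b*k + c = 0" if "k \<noteq> 0" for k
  proof -
    have "c * inverse k + b + a * k = (a*k^2 + b*k + c) / k" using that by (simp add: field_simps power2_eq_square)
    then show ?thesis using that by simp
  qed
  have "k \<in> {k. k \<noteq> 0 \<and> c * inverse k + b + a * k = 0} \<longleftrightarrow> k = r1 \<or> k = r2" for k
  proof
    assume "k \<in> {k. k \<noteq> 0 \<and> c * inverse k + b + a * k = 0}"
    then have "k \<noteq> 0" "c * inverse k + b + a * k = 0" by auto
    then have "a * (k - r1) * (k - r2) = 0" using iff fact by simp
    then show "k = r1 \<or> k = r2" using assms(1) by simp
  next
    assume "k = r1 \<or> k = r2"
    then show "k \<in> {k. k \<noteq> 0 \<and> c * inverse k + b + a * k = 0}"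
      using iff[OF r12(1)] fact[of r1] iff[OF r12(2)] fact[of r2] r12 by auto
  qed
  then show ?thesis unfolding r1_def[symmetric] r2_def[symmetric] by blast
qed



definition ks :: "real \<Rightarrow> complex \<Rightarrow> complex" where
  "ks C z = (- d_0 C z + GG C z) / (2 * d_1 C z)"
definition ku :: "real \<Rightarrow> complex \<Rightarrow> complex" where
  "ku C z = (- d_0 C z - GG C z) / (2 * d_1 C z)"

lemma roots_set: assumes "0 < \<bar>C\<bar>" "\<bar>C\<bar> \<le> 1/2" "z \<noteq> 0" "d_1 C z \<noteq> 0" "d_m1 C z \<noteq> 0"
  shows "{\<kappa>. char_root C z \<kappa>} = {ks C z, ku C z}"
  unfolding char_root_def ks_def ku_def
  using quad_roots[OF assms(4) assms(5), of "GG C z" "d_0 C z"] GG_sq[OF assms(1,2,3)]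
  by (simp add: mult.commute)

lemma zeros_sub: assumes "C \<noteq> 0"
  shows "{z. d_m1 C z = 0 \<or> d_1 C z = 0} \<subseteq>
    {0, of_real (((2*C^2+3*C-2)/3) / ((2*C^2-3*C-2)/3)), of_real (((2*C^2-3*C-2)/3) / ((2*C^2+3*C-2)/3))}"
proof -
  define A where "A = (2*C^2+3*C-2)/3"
  define B where "B = (2*C^2-3*C-2)/3"
  have AB: "A - B = 2*C" unfolding A_def B_def by (simp add: field_simps)
  have e1: "d_1 C z = z * (of_real A - of_real B * z)" for z
    unfolding d_1_def A_def B_def by (simp add: algebra_simps power2_eq_square)
  have e2: "d_m1 C z = z * (of_real B - of_real A * z)" for z
    unfolding d_m1_def A_def B_def by (simp add: algebra_simps power2_eq_square)
  have "z \<in> {0, of_real (A / B), of_real (B / A)}" if "d_m1 C z = 0 \<or> d_1 C z = 0" for z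
  proof (cases "z = 0")
    case False
    show ?thesis using that
    proof
      assume "d_m1 C z = 0"
      then have h: "of_real B = of_real A * z" using False e2 by simp
      have "A \<noteq> 0" proof assume "A = 0" then have "B = 0" using h by simp
        then show False using AB assms \<open>A = 0\<close> by simp qed
      then have "z = of_real B / of_real A" using h by (simp add: field_simps)
      then show ?thesis by simp
    next
      assume "d_1 C z = 0"
      then have h: "of_real A = of_real B * z" using False e1 by simp
      have "B \<noteq> 0" proof assume "B = 0" then have "A = 0" using h by simp
        then show False using AB assms \<open>B = 0\<close> by simp qed
      then have "z = of_real A / of_real B" using h by (simp add: field_simps)
      then show ?thesis by simp
    qed
  qed simp
  then show ?thesis unfolding A_def B_def by blast
qed

definition Om :: "real \<Rightarrow> complex set" where
  "Om C = {z. 1 < cmod z} - {z. d_m1 C z = 0 \<or> d_1 C z = 0}"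

lemma Om_connected: assumes "C \<noteq> 0" shows "connected (Om C)"
proof -
  have e: "{z::complex. 1 < cmod z} = - cball 0 1" by (auto simp: mem_cball)
  have c: "connected {z::complex. 1 < cmod z}" unfolding e
    by (rule connected_complement_bounded_convex) auto
  have o: "open {z::complex. 1 < cmod z}" unfolding e by auto
  have "countable {z. d_m1 C z = 0 \<or> d_1 C z = 0}"
    using zeros_sub[OF assms] by (rule countable_subset) simp
  then show ?thesis unfolding Om_def
    by (intro connected_open_diff_countable o c) auto
qed

lemma conn_sign: fixes f :: "'a::topological_space \<Rightarrow> real"
  assumes "connected S" "continuous_on S f" "\<forall>x\<in>S. f x \<noteq> 1" "x0 \<in> S" "f x0 < 1" "y \<in> S"
  shows "f y < 1"
proof (rule ccontr)
  assume "\<not> f y < 1"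
  then have "1 \<le> f y" by simp
  have "connected (f ` S)" using connected_continuous_image assms(1,2) by blast
  then have "1 \<in> f ` S" unfolding connected_iff_interval
    using assms(4,5,6) \<open>1 \<le> f y\<close> by (metis imageI less_imp_le)
  then show False using assms(3) by auto
qed

lemma d_cont: "continuous_on S (d_0 C)" "continuous_on S (d_1 C)" "continuous_on S (d_m1 C)"
proof -
  show "continuous_on S (d_0 C)" unfolding d_0_def[abs_def] by (intro continuous_intros)
  show "continuous_on S (d_1 C)" unfolding d_1_def[abs_def] by (intro continuous_intros)
  show "continuous_on S (d_m1 C)" unfolding d_m1_def[abs_def] by (intro continuous_intros)
qed

lemma ks_cont: assumes "0 < \<bar>C\<bar>" "\<bar>C\<bar> \<le> 1/2" "S \<subseteq> {z. 1 \<le> cmod z}" "\<forall>z\<in>S. d_1 C z \<noteq> 0"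
  shows "continuous_on S (ks C)" "continuous_on S (ku C)"
proof -
  have g: "continuous_on S (GG C)" using GG_cont[OF assms(1,2)] assms(3) by (rule continuous_on_subset)
  show "continuous_on S (ks C)" unfolding ks_def[abs_def]
    using assms(4) by (intro continuous_intros g d_cont) auto
  show "continuous_on S (ku C)" unfolding ku_def[abs_def]
    using assms(4) by (intro continuous_intros g d_cont) auto
qed

lemma FF_real: assumes "\<bar>t\<bar> \<le> 2" "t < 2" "1 \<le> x"
  shows "\<exists>r\<ge>0. FF t (of_real x) = of_real r"
proof -
  define w where "w = 1 - uu t / of_real x"
  have cw: "cnj w = 1 - cnj (uu t) / of_real x" unfolding w_def by simp
  have "Re w = 1 - (t/2) / x" unfolding w_def by (simp add: uu_def)
  moreover have "(t/2)/x < 1" using assms by (simp add: divide_less_eq)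
  ultimately have "0 < Re w" by simp
  then have "w \<notin> \<real>\<^sub>\<le>\<^sub>0" by (auto simp: complex_nonpos_Reals_iff)
  then have "csqrt (cnj w) = cnj (csqrt w)" by (simp add: cnj_csqrt)
  then have "FF t (of_real x) = csqrt w * cnj (csqrt w)" unfolding FF_def w_def[symmetric] cw[symmetric] by simp
  also have "\<dots> = of_real ((cmod (csqrt w))^2)" by (rule complex_norm_square[symmetric])
  finally show ?thesis by auto
qed

lemma GG_real: assumes "0 < \<bar>C\<bar>" "\<bar>C\<bar> \<le> 1/2" "1 \<le> x"
  shows "\<exists>g\<ge>0. GG C (of_real x) = of_real g"
proof -
  have tb: "\<bar>t1 C\<bar> \<le> 2" "\<bar>t2 C\<bar> \<le> 2" "t1 C < 2" "t2 C < 2" using t_bounds[OF assms(1,2)] by auto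
  obtain r1 where r1: "r1 \<ge> 0" "FF (t1 C) (of_real x) = of_real r1" using FF_real[OF tb(1,3) assms(3)] by auto
  obtain r2 where r2: "r2 \<ge> 0" "FF (t2 C) (of_real x) = of_real r2" using FF_real[OF tb(2,4) assms(3)] by auto
  have "GG C (of_real x) = of_real (x^3 * (1 + 1/x) * r1 * r2)" unfolding GG_def r1 r2 by simp
  moreover have "x^3 * (1 + 1/x) * r1 * r2 \<ge> 0" using assms(3) r1 r2 by simp
  ultimately show ?thesis by blast
qed



lemma d_real:
  "d_0 C (of_real x) = of_real (x^3 + ((4*C^2-1)/3)*x^2 - ((4*C^2-1)/3)*x - 1)"
  "d_1 C (of_real x) = of_real (-((2*C^2-3*C-2)/3)*x^2 + ((2*C^2+3*C-2)/3)*x)"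
  "d_m1 C (of_real x) = of_real (-((2*C^2+3*C-2)/3)*x^2 + ((2*C^2-3*C-2)/3)*x)"
  by (simp_all add: d_0_def d_1_def d_m1_def)

lemma absb1: "0 \<le> (s::real) \<Longrightarrow> s \<le> 1/4 \<Longrightarrow> - 1 / 2 \<le> C \<Longrightarrow> C \<le> 1 / 2 \<Longrightarrow> \<bar>(2 * s + 3 * C - 2) / 3\<bar> \<le> 4/3"
  by (simp add: abs_le_iff)
lemma absb2: "0 \<le> (s::real) \<Longrightarrow> s \<le> 1/4 \<Longrightarrow> - 1 / 2 \<le> C \<Longrightarrow> C \<le> 1 / 2 \<Longrightarrow> \<bar>(2 * s - 3 * C - 2) / 3\<bar> \<le> 4/3"
  by (simp add: abs_le_iff)

lemma real_est:
  fixes C x g r0 r1 rm :: real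
  assumes C: "\<bar>C\<bar> \<le> 1/2" and x: "10 \<le> x" and g: "0 \<le> g"
    and r0: "r0 = x^3 + ((4*C^2-1)/3)*x^2 - ((4*C^2-1)/3)*x - 1"
    and r1: "r1 = -((2*C^2-3*C-2)/3)*x^2 + ((2*C^2+3*C-2)/3)*x"
    and rm: "rm = -((2*C^2+3*C-2)/3)*x^2 + ((2*C^2-3*C-2)/3)*x"
    and gg: "g^2 = r0^2 - 4*r1*rm" and r1nz: "r1 \<noteq> 0"
  shows "\<bar>(-r0+g)/(2*r1)\<bar> < 1" "1 < \<bar>(-r0-g)/(2*r1)\<bar>"
proof -
  define A where "A = (2*C^2+3*C-2)/3"
  define B where "B = (2*C^2-3*C-2)/3"
  have C2: "C^2 \<le> (1/2)^2" using abs_le_square_iff[of C "1/2"] C by simp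
  have C2': "0 \<le> C^2" by simp
  have Cb: "-1/2 \<le> C" "C \<le> 1/2" using C by auto
  have C2'': "C^2 \<le> 1/4" using C2 by (simp add: power_divide)
  have hA: "\<bar>A\<bar> \<le> 4/3" unfolding A_def using C2'' C2' Cb by (intro absb1) auto
  have hB: "\<bar>B\<bar> \<le> 4/3" unfolding B_def using C2'' C2' Cb by (intro absb2) auto
  have x2: "x \<le> x^2" using x by (simp add: power2_eq_square)
  have ab1: "\<bar>r1\<bar> \<le> 8/3 * x^2"
  proof -
    have "\<bar>r1\<bar> \<le> \<bar>B\<bar> * x^2 + \<bar>A\<bar> * x" unfolding r1 A_def[symmetric] B_def[symmetric]
      using x by (smt (verit) abs_mult abs_of_nonneg zero_le_power2 abs_minus_cancel)
    also have "\<dots> \<le> 4/3 * x^2 + 4/3 * x" using hA hB x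
      by (intro add_mono mult_right_mono) auto
    finally show ?thesis using x2 by simp
  qed
  have abm: "\<bar>rm\<bar> \<le> 8/3 * x^2"
  proof -
    have "\<bar>rm\<bar> \<le> \<bar>A\<bar> * x^2 + \<bar>B\<bar> * x" unfolding rm A_def[symmetric] B_def[symmetric]
      using x by (smt (verit) abs_mult abs_of_nonneg zero_le_power2 abs_minus_cancel)
    also have "\<dots> \<le> 4/3 * x^2 + 4/3 * x" using hA hB x
      by (intro add_mono mult_right_mono) auto
    finally show ?thesis using x2 by simp
  qed
  have r0f: "r0 = (x - 1) * (x^2 + ((4*C^2+2)/3)*x + 1)" unfolding r0
    by (simp add: algebra_simps power2_eq_square power3_eq_cube add_divide_distrib diff_divide_distrib)
  have "x^2 \<le> x^2 + ((4*C^2+2)/3)*x + 1" using x C2' by simp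
  then have "9 * x^2 \<le> (x - 1) * (x^2 + ((4*C^2+2)/3)*x + 1)" using x
    by (intro mult_mono) auto
  then have r0b: "9 * x^2 \<le> r0" using r0f by simp
  have xp: "0 < x^2" using x by simp
  have P1: "2 * \<bar>r1\<bar> < r0" using ab1 r0b xp by linarith
  have P2: "2 * \<bar>rm\<bar> < r0" using abm r0b xp by linarith
  have r0p: "0 < r0" using P1 by simp
  have ar1: "0 < \<bar>r1\<bar>" using r1nz by simp
  have fac: "(g - r0) * (g + r0) = - 4 * r1 * rm" using gg by (simp add: algebra_simps power2_eq_square)
  have "\<bar>g - r0\<bar> * (g + r0) = 4 * \<bar>r1\<bar> * \<bar>rm\<bar>"
  proof -
    have "\<bar>g - r0\<bar> * (g + r0) = \<bar>(g - r0) * (g + r0)\<bar>" using g r0p by (simp add: abs_mult)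
    also have "\<dots> = 4 * \<bar>r1\<bar> * \<bar>rm\<bar>" unfolding fac by (simp add: abs_mult)
    finally show ?thesis .
  qed
  also have "\<dots> < 2 * \<bar>r1\<bar> * r0" using P2 ar1 by simp
  also have "\<dots> \<le> 2 * \<bar>r1\<bar> * (g + r0)" using g ar1 by simp
  finally have "\<bar>g - r0\<bar> < 2 * \<bar>r1\<bar>" using g r0p by (simp add: mult.commute mult_less_cancel_left_pos)
  then show "\<bar>(-r0+g)/(2*r1)\<bar> < 1" using ar1 by (simp add: abs_divide abs_mult divide_less_eq)
  have "2 * \<bar>r1\<bar> < \<bar>-r0-g\<bar>" using P1 g by simp
  then show "1 < \<bar>(-r0-g)/(2*r1)\<bar>" using ar1 by (simp add: abs_divide abs_mult less_divide_eq)
qed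



lemma ref_point: assumes "0 < \<bar>C\<bar>" "\<bar>C\<bar> \<le> 1/2"
  shows "\<exists>z0\<in>Om C. cmod (ks C z0) < 1 \<and> 1 < cmod (ku C z0)"
proof -
  define A where "A = (2*C^2+3*C-2)/3"
  define B where "B = (2*C^2-3*C-2)/3"
  define x where "x = 10 + \<bar>A/B\<bar> + \<bar>B/A\<bar>"
  have x10: "10 \<le> x" unfolding x_def by simp
  have C0: "C \<noteq> 0" using assms by auto
  have notz: "of_real x \<notin> {z. d_m1 C z = 0 \<or> d_1 C z = 0}"
  proof
    assume "of_real x \<in> {z. d_m1 C z = 0 \<or> d_1 C z = 0}"
    then have "(of_real x :: complex) \<in> {0, of_real (A/B), of_real (B/A)}"
      using zeros_sub[OF C0] unfolding A_def B_def by blast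
    then have "x = 0 \<or> x = A/B \<or> x = B/A" by (auto simp del: of_real_divide)
    moreover have "A/B < x" "B/A < x" unfolding x_def by (smt (verit) abs_ge_self abs_ge_zero)+
    ultimately show False using x10 by auto
  qed
  have inOm: "of_real x \<in> Om C" unfolding Om_def using notz x10 by simp
  have "1 \<le> x" using x10 by simp
  from GG_real[OF assms this] obtain g where g: "0 \<le> g" "GG C (of_real x) = of_real g" by blast
  define r0 where "r0 = x^3 + ((4*C^2-1)/3)*x^2 - ((4*C^2-1)/3)*x - 1"
  define r1 where "r1 = -((2*C^2-3*C-2)/3)*x^2 + ((2*C^2+3*C-2)/3)*x"
  define rm where "rm = -((2*C^2+3*C-2)/3)*x^2 + ((2*C^2-3*C-2)/3)*x"
  have dr: "d_0 C (of_real x) = of_real r0" "d_1 C (of_real x) = of_real r1" "d_m1 C (of_real x) = of_real rm"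
    unfolding r0_def r1_def rm_def d_real by simp_all
  have r1nz: "r1 \<noteq> 0" using notz dr by auto
  have "of_real (g^2) = (of_real (r0^2 - 4*r1*rm) :: complex)"
    using GG_sq[OF assms, of "of_real x"] x10 unfolding g dr by simp
  then have gg: "g^2 = r0^2 - 4*r1*rm" by (simp only: of_real_eq_iff)
  note est = real_est[OF assms(2) x10 g(1) r0_def r1_def rm_def gg r1nz]
  have "ks C (of_real x) = of_real ((-r0+g)/(2*r1))" unfolding ks_def dr g by simp
  moreover have "ku C (of_real x) = of_real ((-r0-g)/(2*r1))" unfolding ku_def dr g by simp
  ultimately show ?thesis using inOm est by (intro bexI[of _ "of_real x"]) (auto simp del: of_real_divide)
qed

lemma val1: assumes "0 < \<bar>C\<bar>" "\<bar>C\<bar> \<le> 1/2"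
  shows "ks C 1 = (if C < 0 then -1 else 1)" "ku C 1 = (if C < 0 then 1 else -1)"
proof -
  have d0: "d_0 C 1 = 0" using d_real(1)[of C 1] by simp
  have d1: "d_1 C 1 = of_real (2*C)" using d_real(2)[of C 1] by (simp add: field_simps)
  have dm: "d_m1 C 1 = of_real (-2*C)" using d_real(3)[of C 1] by (simp add: field_simps)
  obtain g where g: "0 \<le> g" "GG C 1 = of_real g" using GG_real[OF assms, of 1] by force
  have "of_real (g^2) = (of_real ((4*\<bar>C\<bar>)^2) :: complex)"
    using GG_sq[OF assms, of 1] unfolding g d0 d1 dm by (simp add: power2_eq_square)
  then have "g^2 = (4*\<bar>C\<bar>)^2" by (simp only: of_real_eq_iff)
  then have g4: "g = 4*\<bar>C\<bar>" using g(1) by (rule power2_eq_imp_eq) simp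
  have C0: "C \<noteq> 0" using assms by auto
  have ks1: "ks C 1 = of_real (\<bar>C\<bar>/C)" unfolding ks_def d0 d1 g g4 using C0 by simp
  have ku1: "ku C 1 = of_real (-\<bar>C\<bar>/C)" unfolding ku_def d0 d1 g g4 using C0 by simp
  show "ks C 1 = (if C < 0 then -1 else 1)" unfolding ks1 using C0 by auto
  show "ku C 1 = (if C < 0 then 1 else -1)" unfolding ku1 using C0 by auto
qed

lemma valm1: assumes "0 < \<bar>C\<bar>" "\<bar>C\<bar> \<le> 1/2"
  shows "ks C (-1) = 1" "ku C (-1) = 1"
proof -
  have m1: "(of_real (-1::real) :: complex) = -1" by simp
  have "d_0 C (-1) = of_real ((-1)^3 + ((4*C^2-1)/3)*(-1)^2 - ((4*C^2-1)/3)*(-1) - 1)"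
    using d_real(1)[of C "-1"] unfolding m1 .
  also have "\<dots> = of_real ((8*C^2-8)/3)" by (rule arg_cong[where f=of_real]) (simp add: field_simps)
  finally have d0: "d_0 C (-1) = of_real ((8*C^2-8)/3)" .
  have "d_1 C (-1) = of_real (-((2*C^2-3*C-2)/3)*(-1)^2 + ((2*C^2+3*C-2)/3)*(-1))"
    using d_real(2)[of C "-1"] unfolding m1 .
  also have "\<dots> = of_real ((4-4*C^2)/3)" by (rule arg_cong[where f=of_real]) (simp add: field_simps)
  finally have d1: "d_1 C (-1) = of_real ((4-4*C^2)/3)" .
  have gz: "GG C (-1) = 0" unfolding GG_def by simp
  have C2: "C^2 \<le> (1/2)^2" using abs_le_square_iff[of C "1/2"] assms by simp
  then have nz: "4 - 4*C^2 \<noteq> 0" by (simp add: power_divide)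
  define a where "a = (4-4*C^2)/3"
  have "a \<noteq> 0" unfolding a_def using nz by simp
  then have a0: "(of_real a :: complex) \<noteq> 0" by (simp only: of_real_eq_0_iff not_False_eq_True)
  have "(8*C^2-8)/3 = - 2 * a" unfolding a_def by (simp add: field_simps)
  then have d0': "d_0 C (-1) = - 2 * of_real a" unfolding d0 by simp
  have d1': "d_1 C (-1) = of_real a" unfolding d1 a_def ..
  show "ks C (-1) = 1" unfolding ks_def d0' d1' gz using a0 by simp
  show "ku C (-1) = 1" unfolding ku_def d0' d1' gz using a0 by simp
qed



theorem mainTheorem11:
  fixes C :: real
  assumes "0 < \<bar>C\<bar>" and "\<bar>C\<bar> \<le> 1/2"
  shows "\<exists>\<kappa>s \<kappa>u :: complex \<Rightarrow> complex.
     (\<forall>z. 1 < cmod z \<and> d_m1 C z \<noteq> 0 \<and> d_1 C z \<noteq> 0 \<longrightarrow>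
          cmod (\<kappa>s z) < 1 \<and> 1 < cmod (\<kappa>u z) \<and>
          {\<kappa>. char_root C z \<kappa>} = {\<kappa>s z, \<kappa>u z})
   \<and> continuous_on ({z. 1 \<le> cmod z} - {z. d_m1 C z = 0 \<or> d_1 C z = 0}) \<kappa>s
   \<and> continuous_on ({z. 1 \<le> cmod z} - {z. d_m1 C z = 0 \<or> d_1 C z = 0}) \<kappa>u
   \<and> \<kappa>s 1 = (if C < 0 then -1 else 1)
   \<and> \<kappa>u 1 = (if C < 0 then 1 else -1)
   \<and> \<kappa>s (-1) = 1 \<and> \<kappa>u (-1) = 1"
proof -
  have C0: "C \<noteq> 0" using assms by auto
  define S where "S = {z. 1 \<le> cmod z} - {z. d_m1 C z = 0 \<or> d_1 C z = 0}"
  have cS: "continuous_on S (ks C)" "continuous_on S (ku C)"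
  proof -
    have h: "S \<subseteq> {z. 1 \<le> cmod z}" "\<forall>z\<in>S. d_1 C z \<noteq> 0" unfolding S_def by auto
    show "continuous_on S (ks C)" "continuous_on S (ku C)" by (rule ks_cont[OF assms h])+
  qed
  have OmS: "Om C \<subseteq> S" unfolding Om_def S_def by auto
  have cO: "continuous_on (Om C) (ks C)" "continuous_on (Om C) (ku C)"
    by (rule continuous_on_subset[OF cS(1) OmS], rule continuous_on_subset[OF cS(2) OmS])
  have roots: "{\<kappa>. char_root C z \<kappa>} = {ks C z, ku C z}" if "z \<in> Om C" for z
  proof -
    have h: "z \<noteq> 0" "d_1 C z \<noteq> 0" "d_m1 C z \<noteq> 0" using that unfolding Om_def by auto
    show ?thesis by (rule roots_set[OF assms h])
  qed
  have ne: "cmod k \<noteq> 1" if "z \<in> Om C" "k \<in> {ks C z, ku C z}" for z k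
  proof
    assume k1: "cmod k = 1"
    have "k \<in> {\<kappa>. char_root C z \<kappa>}" unfolding roots[OF that(1)] by (rule that(2))
    then have "char_root C z k" by simp
    then have "d_m1 C z * inverse k + d_0 C z + d_1 C z * k = 0" unfolding char_root_def by simp
    moreover have "1 < cmod z" using that(1) unfolding Om_def by auto
    ultimately show False using stab[OF assms _ k1] by blast
  qed
  obtain z0 where z0: "z0 \<in> Om C" "cmod (ks C z0) < 1" "1 < cmod (ku C z0)" using ref_point[OF assms] by blast
  have conn: "connected (Om C)" by (rule Om_connected[OF C0])
  have ne1: "\<forall>x\<in>Om C. cmod (ks C x) \<noteq> 1"
  proof
    fix x assume x: "x \<in> Om C"
    show "cmod (ks C x) \<noteq> 1" by (rule ne[OF x]) simp
  qed
  have ne2: "\<forall>x\<in>Om C. 2 - cmod (ku C x) \<noteq> 1"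
  proof
    fix x assume x: "x \<in> Om C"
    have "cmod (ku C x) \<noteq> 1" by (rule ne[OF x]) simp
    then show "2 - cmod (ku C x) \<noteq> 1" by simp
  qed
  have in_s: "cmod (ks C z) < 1" if "z \<in> Om C" for z
    by (rule conn_sign[OF conn continuous_on_norm[OF cO(1)] ne1 z0(1) z0(2) that])
  have out_u: "1 < cmod (ku C z)" if "z \<in> Om C" for z
  proof -
    have c: "continuous_on (Om C) (\<lambda>z. 2 - cmod (ku C z))"
      by (intro continuous_intros cO(2))
    have "2 - cmod (ku C z) < 1"
      by (rule conn_sign[OF conn c ne2 z0(1) _ that]) (use z0(3) in simp)
    then show ?thesis by simp
  qed
  have P1: "\<forall>z. 1 < cmod z \<and> d_m1 C z \<noteq> 0 \<and> d_1 C z \<noteq> 0 \<longrightarrow>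
          cmod (ks C z) < 1 \<and> 1 < cmod (ku C z) \<and> {\<kappa>. char_root C z \<kappa>} = {ks C z, ku C z}"
  proof (intro allI impI)
    fix z assume z: "1 < cmod z \<and> d_m1 C z \<noteq> 0 \<and> d_1 C z \<noteq> 0"
    then have zO: "z \<in> Om C" unfolding Om_def by auto
    show "cmod (ks C z) < 1 \<and> 1 < cmod (ku C z) \<and> {\<kappa>. char_root C z \<kappa>} = {ks C z, ku C z}"
      using in_s[OF zO] out_u[OF zO] roots[OF zO] by blast
  qed
  have all: "(\<forall>z. 1 < cmod z \<and> d_m1 C z \<noteq> 0 \<and> d_1 C z \<noteq> 0 \<longrightarrow>
          cmod (ks C z) < 1 \<and> 1 < cmod (ku C z) \<and>
          {\<kappa>. char_root C z \<kappa>} = {ks C z, ku C z})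
   \<and> continuous_on ({z. 1 \<le> cmod z} - {z. d_m1 C z = 0 \<or> d_1 C z = 0}) (ks C)
   \<and> continuous_on ({z. 1 \<le> cmod z} - {z. d_m1 C z = 0 \<or> d_1 C z = 0}) (ku C)
   \<and> ks C 1 = (if C < 0 then -1 else 1)
   \<and> ku C 1 = (if C < 0 then 1 else -1)
   \<and> ks C (-1) = 1 \<and> ku C (-1) = 1"
    using P1 cS[unfolded S_def] val1[OF assms] valm1[OF assms] by blast
  then show ?thesis by blast
qed

end
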